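(* For every integer $k\ge 0$, the number of projection-surjective subgroups of $Z_2^k$ is $$n_k=\sum_{i=0}^k(-1)^{i+k}\binom{k}{i}\sum_{j=0}^i{\binom{i}{j}}_2,\qquad\text{where}\qquad {\binom{i}{j}}_2=\frac{\prod_{l=0}^{j-1}\left(2^{i-l}-1\right)}{\prod_{l=1}^j\left(2^l-1\right)}.$$
   Context: A subgroup $H$ of $Z_2^k=Z_2\times\cdots\times Z_2$ is projection-surjective if its image under each of the $k$ coordinate projections $Z_2^k\to Z_2$ is all of $Z_2$. *)

theory Defs
  imports "HOL-Algebra.Elementary_Groups" "HOL-Algebra.Product_Groups"
begin

definition Z2pow :: "nat \<Rightarrow> (nat \<Rightarrow> int) monoid" where
  "Z2pow k = product_group {..<k} (\<lambda>_. integer_mod_group 2)"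

definition proj_surjective :: "nat \<Rightarrow> (nat \<Rightarrow> int) set \<Rightarrow> bool" where
  "proj_surjective k H \<longleftrightarrow>
     (\<forall>i<k. (\<lambda>x. x i) ` H = carrier (integer_mod_group 2))"

definition gbinom2 :: "nat \<Rightarrow> nat \<Rightarrow> rat" where
  "gbinom2 i j = (\<Prod>l\<in>{0..<j}. (2::rat) ^ (i - l) - 1) / (\<Prod>l\<in>{1..j}. (2::rat) ^ l - 1)"

end

theory Submission
  imports Defs
begin

definition V :: "nat set \<Rightarrow> (nat \<Rightarrow> int) set" where
  "V I = PiE I (\<lambda>_. {0,1})"
definition zr :: "nat set \<Rightarrow> nat \<Rightarrow> int" where
  "zr I = (\<lambda>j\<in>I. 0)"
definition ad :: "nat set \<Rightarrow> (nat \<Rightarrow> int) \<Rightarrow> (nat \<Rightarrow> int) \<Rightarrow> nat \<Rightarrow> int" where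
  "ad I x y = (\<lambda>j\<in>I. (x j + y j) mod 2)"
definition sg :: "nat set \<Rightarrow> (nat \<Rightarrow> int) set \<Rightarrow> bool" where
  "sg I H \<longleftrightarrow> H \<subseteq> V I \<and> zr I \<in> H \<and> (\<forall>x\<in>H. \<forall>y\<in>H. ad I x y \<in> H)"

lemma V_iff: "x \<in> V I \<longleftrightarrow> (\<forall>j. (j \<in> I \<longrightarrow> x j = 0 \<or> x j = 1) \<and> (j \<notin> I \<longrightarrow> x j = undefined))"
  by (auto simp: V_def PiE_iff extensional_def)

lemma zr_V[simp]: "zr I \<in> V I"
  by (auto simp: V_iff zr_def)

lemma ad_V[simp]: "ad I x y \<in> V I"
proof -
  have "(a + b) mod 2 = 0 \<or> (a + b) mod 2 = 1" for a b :: int by presburger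
  then show ?thesis by (auto simp: V_iff ad_def)
qed

lemma ad_comm: "ad I x y = ad I y x"
  by (auto simp: ad_def add.commute)

lemma ad_assoc: "ad I (ad I x y) z = ad I x (ad I y z)"
proof -
  have "((a + b) mod 2 + c) mod 2 = (a + (b + c) mod 2) mod 2" for a b c :: int
    by (simp add: mod_add_left_eq mod_add_right_eq add.assoc)
  then show ?thesis by (auto simp: ad_def intro!: ext)
qed

lemma V_mod: "x \<in> V I \<Longrightarrow> j \<in> I \<Longrightarrow> x j mod 2 = x j"
  by (auto simp: V_iff)

lemma V_ext: "x \<in> V I \<Longrightarrow> j \<notin> I \<Longrightarrow> x j = undefined"
  by (auto simp: V_iff)

lemma ad_zr: "x \<in> V I \<Longrightarrow> ad I x (zr I) = x"
  by (auto simp: ad_def zr_def V_mod V_ext intro!: ext) 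

lemma zr_ad: "x \<in> V I \<Longrightarrow> ad I (zr I) x = x"
  by (auto simp: ad_def zr_def V_mod V_ext intro!: ext) 

lemma ad_self: "x \<in> V I \<Longrightarrow> ad I x x = zr I"
  by (auto simp: ad_def zr_def intro!: ext) 

lemma ad_cancel: "x \<in> V I \<Longrightarrow> y \<in> V I \<Longrightarrow> ad I x (ad I x y) = y"
  by (simp add: ad_assoc[symmetric] ad_self zr_ad)

lemma card_V: "finite I \<Longrightarrow> card (V I) = 2 ^ card I"
  by (simp add: V_def card_PiE numeral_2_eq_2)

lemma finite_V: "finite I \<Longrightarrow> finite (V I)"
  by (simp add: V_def finite_PiE)

lemma carrier_Z2pow: "carrier (Z2pow k) = V {..<k}"
proof -
  have "{0..<int 2} = {0,1::int}" by auto
  then show ?thesis by (simp add: Z2pow_def V_def carrier_integer_mod_group)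
qed

lemma sg_iff_subgroup: "subgroup H (Z2pow k) \<longleftrightarrow> sg {..<k} H"
proof
  assume s: "subgroup H (Z2pow k)"
  show "sg {..<k} H"
    unfolding sg_def
  proof (intro conjI ballI)
    show "H \<subseteq> V {..<k}" using subgroup.subset[OF s] carrier_Z2pow by simp
    show "zr {..<k} \<in> H" using subgroup.one_closed[OF s] by (simp add: Z2pow_def zr_def)
    fix x y assume "x \<in> H" "y \<in> H"
    then show "ad {..<k} x y \<in> H" using subgroup.m_closed[OF s] by (simp add: Z2pow_def ad_def)
  qed
next
  assume s: "sg {..<k} H"
  have g: "group (Z2pow k)" by (simp add: Z2pow_def)
  show "subgroup H (Z2pow k)"
  proof (rule group.subgroupI[OF g])
    show "H \<subseteq> carrier (Z2pow k)" using s by (simp add: sg_def carrier_Z2pow)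
    show "H \<noteq> {}" using s by (auto simp: sg_def)
    fix a b assume a: "a \<in> H" and b: "b \<in> H"
    then show "a \<otimes>\<^bsub>Z2pow k\<^esub> b \<in> H" using s by (simp add: Z2pow_def sg_def ad_def)
    have aV: "a \<in> V {..<k}" using a s by (auto simp: sg_def)
    have "inv\<^bsub>Z2pow k\<^esub> a = (\<lambda>i\<in>{..<k}. (- a i) mod 2)"
      unfolding Z2pow_def
      by (subst inv_product_group) (use aV carrier_Z2pow in \<open>auto simp: Z2pow_def V_iff carrier_integer_mod_group intro!: ext\<close>)
    also have "\<dots> = a"
    proof
      fix i show "(\<lambda>i\<in>{..<k}. (- a i) mod 2) i = a i"
      proof (cases "i < k")
        case True
        then have "a i = 0 \<or> a i = 1" using aV by (simp add: V_iff)
        then show ?thesis using True by auto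
      next
        case False
        then show ?thesis using aV by (simp add: V_iff)
      qed
    qed
    finally show "inv\<^bsub>Z2pow k\<^esub> a \<in> H" using a by simp
  qed
qed


definition glue :: "nat \<Rightarrow> (nat \<Rightarrow> int) set \<Rightarrow> (nat \<Rightarrow> int) set \<Rightarrow> (nat \<Rightarrow> int) set" where
  "glue i K W = (\<lambda>y. y(i:=0)) ` K \<union> (\<lambda>y. y(i:=1)) ` W"
definition Kp :: "nat set \<Rightarrow> nat \<Rightarrow> (nat \<Rightarrow> int) set \<Rightarrow> (nat \<Rightarrow> int) set" where
  "Kp J i H = (\<lambda>x. restrict x J) ` {x\<in>H. x i = 0}"
definition Wp :: "nat set \<Rightarrow> nat \<Rightarrow> (nat \<Rightarrow> int) set \<Rightarrow> (nat \<Rightarrow> int) set" where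
  "Wp J i H = (\<lambda>x. restrict x J) ` {x\<in>H. x i = 1}"
definition cos :: "nat set \<Rightarrow> (nat \<Rightarrow> int) set \<Rightarrow> (nat \<Rightarrow> int) set set" where
  "cos J K = (\<lambda>v. ad J v ` K) ` V J"

lemma upd_V: "y \<in> V (I - {i}) \<Longrightarrow> i \<in> I \<Longrightarrow> c = 0 \<or> c = 1 \<Longrightarrow> y(i:=c) \<in> V I"
  by (auto simp: V_iff)

lemma restrict_upd: "y \<in> V J \<Longrightarrow> i \<notin> J \<Longrightarrow> restrict (y(i:=c)) J = y"
  by (auto simp: V_iff intro!: ext)

lemma restrict_upd_back: "x \<in> V I \<Longrightarrow> i \<in> I \<Longrightarrow> (restrict x (I - {i}))(i := x i) = x"
  by (auto simp: V_iff intro!: ext)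

lemma restrict_V: "x \<in> V I \<Longrightarrow> J \<subseteq> I \<Longrightarrow> restrict x J \<in> V J"
  by (auto simp: V_iff)

lemma ad_upd: "i \<in> I \<Longrightarrow> ad I (a(i:=c)) (b(i:=d)) = (ad (I - {i}) a b)(i := (c + d) mod 2)"
  by (auto simp: ad_def intro!: ext)

lemma restrict_ad: "J \<subseteq> I \<Longrightarrow> restrict (ad I x y) J = ad J (restrict x J) (restrict y J)"
  by (auto simp: ad_def intro!: ext)

lemma zr_upd: "i \<in> I \<Longrightarrow> zr I = (zr (I - {i}))(i:=0)"
  by (auto simp: zr_def intro!: ext)

lemma restrict_zr: "J \<subseteq> I \<Longrightarrow> restrict (zr I) J = zr J"
  by (auto simp: zr_def intro!: ext)

lemma sg_V: "sg I H \<Longrightarrow> x \<in> H \<Longrightarrow> x \<in> V I"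
  by (auto simp: sg_def)

lemma cos_sub: "c \<in> cos J K \<Longrightarrow> c \<subseteq> V J"
  by (auto simp: cos_def)

lemma glue_sg:
  assumes i: "i \<in> I" and K: "sg (I - {i}) K" and W: "W = {} \<or> W \<in> cos (I - {i}) K"
  shows "sg I (glue i K W)"
proof -
  let ?J = "I - {i}"
  have KV: "K \<subseteq> V ?J" using K by (simp add: sg_def)
  have WV: "W \<subseteq> V ?J" using W cos_sub by auto
  have Wform: "\<And>w. w \<in> W \<Longrightarrow> \<exists>v\<in>V ?J. \<exists>k\<in>K. w = ad ?J v k \<and> W = ad ?J v ` K"
    using W by (auto simp: cos_def)
  have Kc: "\<And>a b. a \<in> K \<Longrightarrow> b \<in> K \<Longrightarrow> ad ?J a b \<in> K" using K by (simp add: sg_def)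
  show ?thesis unfolding sg_def
  proof (intro conjI ballI)
    show "glue i K W \<subseteq> V I" using KV WV i by (auto simp: glue_def intro!: upd_V)
    show "zr I \<in> glue i K W" using K i by (auto simp: glue_def sg_def zr_upd[OF i])
    fix x y assume x: "x \<in> glue i K W" and y: "y \<in> glue i K W"
    show "ad I x y \<in> glue i K W"
    proof -
      {
        fix a b assume a: "a \<in> K" and b: "b \<in> K"
        have "ad I (a(i:=0)) (b(i:=0)) = (ad ?J a b)(i:=0)" using ad_upd[OF i] by simp
        then have "ad I (a(i:=0)) (b(i:=0)) \<in> glue i K W" using Kc[OF a b] by (auto simp: glue_def)
      } note KK = this
      {
        fix a w assume a: "a \<in> K" and w: "w \<in> W"
        obtain v k where v: "v \<in> V ?J" and k: "k \<in> K" and wv: "w = ad ?J v k" and Weq: "W = ad ?J v ` K"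
          using Wform[OF w] by blast
        have "ad ?J a w = ad ?J v (ad ?J a k)" unfolding wv
          by (simp only: ad_assoc[symmetric] ad_comm[of ?J a v])
        then have "ad ?J a w \<in> W" using Weq Kc[OF a k] by auto
        moreover have "ad I (a(i:=0)) (w(i:=1)) = (ad ?J a w)(i:=1)" using ad_upd[OF i] by simp
        ultimately have "ad I (a(i:=0)) (w(i:=1)) \<in> glue i K W" by (auto simp: glue_def)
        moreover have "ad I (w(i:=1)) (a(i:=0)) = ad I (a(i:=0)) (w(i:=1))" by (rule ad_comm)
        ultimately have "ad I (a(i:=0)) (w(i:=1)) \<in> glue i K W" "ad I (w(i:=1)) (a(i:=0)) \<in> glue i K W"
          by auto
      } note KW = this
      {
        fix w1 w2 assume w1: "w1 \<in> W" and w2: "w2 \<in> W"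
        obtain v k1 where v: "v \<in> V ?J" and k1: "k1 \<in> K" and wv1: "w1 = ad ?J v k1" and Weq: "W = ad ?J v ` K"
          using Wform[OF w1] by blast
        obtain k2 where k2: "k2 \<in> K" and wv2: "w2 = ad ?J v k2" using w2 Weq by auto
        have k2V: "k2 \<in> V ?J" using k2 KV by auto
        have "ad ?J w1 w2 = ad ?J k1 (ad ?J v (ad ?J v k2))" unfolding wv1 wv2
          by (simp only: ad_comm[of ?J v k1] ad_assoc)
        also have "\<dots> = ad ?J k1 k2" using ad_cancel[OF v k2V] by simp
        finally have "ad ?J w1 w2 \<in> K" using Kc[OF k1 k2] by simp
        moreover have "ad I (w1(i:=1)) (w2(i:=1)) = (ad ?J w1 w2)(i:=0)" using ad_upd[OF i] by simp
        ultimately have "ad I (w1(i:=1)) (w2(i:=1)) \<in> glue i K W" by (auto simp: glue_def)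
      } note WW = this
      show ?thesis using x y KK KW WW unfolding glue_def by blast
    qed
  qed
qed

lemma sg_decomp:
  assumes i: "i \<in> I" and H: "sg I H"
  shows "sg (I - {i}) (Kp (I - {i}) i H)"
    and "Wp (I - {i}) i H = {} \<or> Wp (I - {i}) i H \<in> cos (I - {i}) (Kp (I - {i}) i H)"
    and "glue i (Kp (I - {i}) i H) (Wp (I - {i}) i H) = H"
proof -
  let ?J = "I - {i}"
  have HV: "H \<subseteq> V I" using H by (simp add: sg_def)
  have Hc: "\<And>a b. a \<in> H \<Longrightarrow> b \<in> H \<Longrightarrow> ad I a b \<in> H" using H by (simp add: sg_def)
  have adi: "ad I a b i = (a i + b i) mod 2" for a b using i by (simp add: ad_def)
  have rad: "restrict (ad I a b) ?J = ad ?J (restrict a ?J) (restrict b ?J)" for a b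
    by (rule restrict_ad) auto
  show K: "sg ?J (Kp ?J i H)" unfolding sg_def Kp_def
  proof (intro conjI ballI)
    show "(\<lambda>x. restrict x ?J) ` {x \<in> H. x i = 0} \<subseteq> V ?J" using HV restrict_V by blast
    have "zr I \<in> H" "zr I i = 0" using H i by (auto simp: sg_def zr_def)
    moreover have "restrict (zr I) ?J = zr ?J" by (rule restrict_zr) auto
    ultimately show "zr ?J \<in> (\<lambda>x. restrict x ?J) ` {x \<in> H. x i = 0}"
      unfolding image_iff by (intro bexI[where x="zr I"]) auto
    fix x y assume "x \<in> (\<lambda>x. restrict x ?J) ` {x \<in> H. x i = 0}" "y \<in> (\<lambda>x. restrict x ?J) ` {x \<in> H. x i = 0}"
    then obtain a b where "a \<in> H" "a i = 0" "b \<in> H" "b i = 0" "x = restrict a ?J" "y = restrict b ?J" by auto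
    then show "ad ?J x y \<in> (\<lambda>x. restrict x ?J) ` {x \<in> H. x i = 0}"
      using Hc[of a b] adi[of a b] rad[of a b] by (auto intro!: image_eqI[where x="ad I a b"])
  qed
  show "Wp ?J i H = {} \<or> Wp ?J i H \<in> cos ?J (Kp ?J i H)"
  proof (cases "Wp ?J i H = {}")
    case False
    then obtain x0 where x0: "x0 \<in> H" "x0 i = 1" by (auto simp: Wp_def)
    let ?v = "restrict x0 ?J"
    have vV: "?v \<in> V ?J" using x0 HV restrict_V by blast
    have "Wp ?J i H = ad ?J ?v ` Kp ?J i H"
    proof
      show "Wp ?J i H \<subseteq> ad ?J ?v ` Kp ?J i H"
      proof
        fix w assume "w \<in> Wp ?J i H"
        then obtain x where x: "x \<in> H" "x i = 1" "w = restrict x ?J" by (auto simp: Wp_def)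
        have wV: "w \<in> V ?J" using x HV restrict_V by blast
        have "ad I x0 x \<in> H" "ad I x0 x i = 0" using Hc[OF x0(1) x(1)] adi x x0 by auto
        then have "ad ?J ?v w \<in> Kp ?J i H" unfolding Kp_def
          by (intro image_eqI[where x="ad I x0 x"]) (use rad x in auto)
        moreover have "w = ad ?J ?v (ad ?J ?v w)" using ad_cancel[OF vV wV] by simp
        ultimately show "w \<in> ad ?J ?v ` Kp ?J i H" by blast
      qed
      show "ad ?J ?v ` Kp ?J i H \<subseteq> Wp ?J i H"
      proof
        fix w assume "w \<in> ad ?J ?v ` Kp ?J i H"
        then obtain x where x: "x \<in> H" "x i = 0" "w = ad ?J ?v (restrict x ?J)" by (auto simp: Kp_def)
        have "ad I x0 x \<in> H" "ad I x0 x i = 1" using Hc[OF x0(1) x(1)] adi x x0 by auto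
        then show "w \<in> Wp ?J i H" unfolding Wp_def
          by (intro image_eqI[where x="ad I x0 x"]) (use rad x in auto)
      qed
    qed
    then show ?thesis using vV by (auto simp: cos_def)
  qed simp
  show "glue i (Kp ?J i H) (Wp ?J i H) = H"
  proof
    show "glue i (Kp ?J i H) (Wp ?J i H) \<subseteq> H"
    proof
      fix y assume "y \<in> glue i (Kp ?J i H) (Wp ?J i H)"
      then obtain x where x: "x \<in> H" "y = (restrict x ?J)(i := x i)"
        unfolding glue_def Kp_def Wp_def by (smt (verit) Un_iff image_iff mem_Collect_eq)
      have "x \<in> V I" using x HV by auto
      then have "(restrict x ?J)(i := x i) = x" by (rule restrict_upd_back[OF _ i])
      then show "y \<in> H" using x by metis
    qed
    show "H \<subseteq> glue i (Kp ?J i H) (Wp ?J i H)"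
    proof
      fix x assume x: "x \<in> H"
      then have xV: "x \<in> V I" using HV by auto
      then have "x i = 0 \<or> x i = 1" using i by (auto simp: V_iff)
      then show "x \<in> glue i (Kp ?J i H) (Wp ?J i H)"
        using restrict_upd_back[OF xV i] x unfolding glue_def Kp_def Wp_def
        by (metis (mono_tags, lifting) UnI1 UnI2 image_eqI mem_Collect_eq)
    qed
  qed
qed

lemma Kp_glue: assumes "K \<subseteq> V J" "i \<notin> J" shows "Kp J i (glue i K W) = K"
proof -
  have "{x \<in> glue i K W. x i = 0} = (\<lambda>y. y(i:=0)) ` K" by (auto simp: glue_def)
  then have "Kp J i (glue i K W) = (\<lambda>y. restrict (y(i:=0)) J) ` K" by (simp add: Kp_def image_image)
  also have "\<dots> = K" using assms restrict_upd by (simp add: subset_iff cong: image_cong)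
  finally show ?thesis .
qed

lemma Wp_glue: assumes "W \<subseteq> V J" "i \<notin> J" shows "Wp J i (glue i K W) = W"
proof -
  have "{x \<in> glue i K W. x i = 1} = (\<lambda>y. y(i:=1)) ` W" by (auto simp: glue_def)
  then have "Wp J i (glue i K W) = (\<lambda>y. restrict (y(i:=1)) J) ` W" by (simp add: Wp_def image_image)
  also have "\<dots> = W" using assms restrict_upd by (simp add: subset_iff cong: image_cong)
  finally show ?thesis .
qed

lemma card_glue:
  assumes "K \<subseteq> V J" "W \<subseteq> V J" "i \<notin> J" "finite K" "finite W"
  shows "card (glue i K W) = card K + card W"
proof -
  have "inj_on (\<lambda>y. y(i:=c)) (V J)" for c :: int
    by (rule inj_onI) (metis assms(3) restrict_upd)
  then have "card ((\<lambda>y. y(i:=0)) ` K) = card K" "card ((\<lambda>y. y(i:=1)) ` W) = card W"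
    using card_image[OF inj_on_subset[OF _ assms(1)]] card_image[OF inj_on_subset[OF _ assms(2)]] by blast+
  moreover have ne: "y(i:=0) \<noteq> z(i:=1)" for y z :: "nat \<Rightarrow> int"
  proof
    assume "y(i:=0) = z(i:=1)"
    then have "(y(i:=0)) i = (z(i:=1)) i" by simp
    then show False by simp
  qed
  have "(\<lambda>y. y(i:=0)) ` K \<inter> (\<lambda>y. y(i:=(1::int))) ` W = {}"
    using ne by blast
  ultimately show ?thesis using assms unfolding glue_def by (simp add: card_Un_disjoint)
qed

lemma card_cos:
  assumes K: "sg J K" and J: "finite J"
  shows "\<And>c. c \<in> cos J K \<Longrightarrow> card c = card K"
    and "card K * card (cos J K) = 2 ^ card J"
proof -
  have KV: "K \<subseteq> V J" using K by (simp add: sg_def)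
  have inj: "inj_on (ad J v) (V J)" if "v \<in> V J" for v
    by (rule inj_onI) (metis ad_cancel that)
  show cc: "card c = card K" if cin: "c \<in> cos J K" for c
  proof -
    obtain v where v: "v \<in> V J" "c = ad J v ` K" using cin unfolding cos_def by blast
    show ?thesis using card_image[OF inj_on_subset[OF inj[OF v(1)] KV]] v(2) by simp
  qed
  have fin: "finite (cos J K)" using finite_V[OF J] by (simp add: cos_def)
  have un: "\<Union>(cos J K) = V J"
  proof
    show "\<Union>(cos J K) \<subseteq> V J" using cos_sub by blast
    show "V J \<subseteq> \<Union>(cos J K)"
    proof
      fix v assume v: "v \<in> V J"
      have "v = ad J v (zr J)" using ad_zr[OF v] by simp
      moreover have "zr J \<in> K" using K by (simp add: sg_def)
      ultimately show "v \<in> \<Union>(cos J K)" using v by (auto simp: cos_def)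
    qed
  qed
  have disj: "\<forall>c1\<in>cos J K. \<forall>c2\<in>cos J K. c1 \<noteq> c2 \<longrightarrow> c1 \<inter> c2 = {}"
  proof (intro ballI impI)
    fix c1 c2 assume c1: "c1 \<in> cos J K" and c2: "c2 \<in> cos J K" and ne: "c1 \<noteq> c2"
    obtain v where v: "v \<in> V J" "c1 = ad J v ` K" using c1 by (auto simp: cos_def)
    obtain w where w: "w \<in> V J" "c2 = ad J w ` K" using c2 by (auto simp: cos_def)
    show "c1 \<inter> c2 = {}"
    proof (rule ccontr)
      assume "c1 \<inter> c2 \<noteq> {}"
      then obtain a b where a: "a \<in> K" and b: "b \<in> K" and e: "ad J v a = ad J w b" using v w by auto
      have aV: "a \<in> V J" and bV: "b \<in> V J" using a b KV by auto
      have Kc: "\<And>x y. x \<in> K \<Longrightarrow> y \<in> K \<Longrightarrow> ad J x y \<in> K" using K by (simp add: sg_def)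
      have sub: "ad J v ` K \<subseteq> ad J w ` K" if e: "ad J v a = ad J w b" and v: "v \<in> V J" and w: "w \<in> V J"
        and a: "a \<in> K" and b: "b \<in> K" for v w a b
      proof
        fix x assume "x \<in> ad J v ` K"
        then obtain c where c: "c \<in> K" "x = ad J v c" by auto
        have aV: "a \<in> V J" using a KV by auto
        have "v = ad J (ad J v a) a" by (simp add: ad_assoc ad_self[OF aV] ad_zr[OF v])
        then have "x = ad J (ad J (ad J w b) a) c" using c e by simp
        also have "\<dots> = ad J w (ad J b (ad J a c))" by (simp add: ad_assoc)
        finally show "x \<in> ad J w ` K" using Kc[OF b Kc[OF a c(1)]] by blast
      qed
      have "c1 = c2" using sub[OF e v(1) w(1) a b] sub[OF e[symmetric] w(1) v(1) b a] v w by auto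
      then show False using ne by simp
    qed
  qed
  have "card K * card (cos J K) = card (\<Union>(cos J K))"
    by (rule card_partition[OF fin]) (use un finite_V[OF J] cc disj in auto)
  then show "card K * card (cos J K) = 2 ^ card J" using un card_V[OF J] by simp
qed


lemma finite_sgs: "finite I \<Longrightarrow> finite {H. sg I H}"
  by (rule finite_subset[where B="Pow (V I)"]) (auto simp: sg_def finite_V)

lemma sg_finite: "finite I \<Longrightarrow> sg I H \<Longrightarrow> finite H"
  using finite_V finite_subset sg_def by blast

lemma sg_empty: "sg {} H \<longleftrightarrow> H = {zr {}}"
proof -
  have V0: "V {} = {zr {}}" by (auto simp: V_def zr_def)
  have "ad {} x y = zr {}" for x y by (auto simp: ad_def zr_def restrict_def)
  then show ?thesis using V0 by (auto simp: sg_def)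
qed

lemma decomp_bij:
  assumes i: "i \<in> I"
  shows "bij_betw (\<lambda>(K,W). glue i K W) {(K,W). sg (I - {i}) K \<and> (W = {} \<or> W \<in> cos (I - {i}) K)} {H. sg I H}"
proof -
  let ?J = "I - {i}"
  let ?Q = "{(K,W). sg ?J K \<and> (W = {} \<or> W \<in> cos ?J K)}"
  have iJ: "i \<notin> ?J" by simp
  show ?thesis unfolding bij_betw_def
  proof
    show "inj_on (\<lambda>(K,W). glue i K W) ?Q"
    proof (rule inj_onI)
      fix p q assume p: "p \<in> ?Q" and q: "q \<in> ?Q" and e0: "(\<lambda>(K,W). glue i K W) p = (\<lambda>(K,W). glue i K W) q"
      obtain K W where pk: "p = (K,W)" by (cases p)
      obtain K' W' where qk: "q = (K',W')" by (cases q)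
      have a: "sg ?J K" "W = {} \<or> W \<in> cos ?J K" "sg ?J K'" "W' = {} \<or> W' \<in> cos ?J K'"
        using p q pk qk by auto
      have e: "glue i K W = glue i K' W'" using e0 pk qk by simp
      have sub: "K \<subseteq> V ?J" "W \<subseteq> V ?J" "K' \<subseteq> V ?J" "W' \<subseteq> V ?J"
        using a cos_sub by (auto simp: sg_def)
      have "K = K'" using Kp_glue[OF sub(1) iJ, of W] Kp_glue[OF sub(3) iJ, of W'] e by simp
      moreover have "W = W'" using Wp_glue[OF sub(2) iJ, of K] Wp_glue[OF sub(4) iJ, of K'] e by simp
      ultimately show "p = q" using pk qk by simp
    qed
    show "(\<lambda>(K,W). glue i K W) ` ?Q = {H. sg I H}"
    proof
      show "(\<lambda>(K,W). glue i K W) ` ?Q \<subseteq> {H. sg I H}" using glue_sg[OF i] by auto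
      show "{H. sg I H} \<subseteq> (\<lambda>(K,W). glue i K W) ` ?Q"
      proof
        fix H assume "H \<in> {H. sg I H}"
        then have H: "sg I H" by simp
        show "H \<in> (\<lambda>(K,W). glue i K W) ` ?Q"
          using sg_decomp[OF i H]
          by (intro image_eqI[where x="(Kp ?J i H, Wp ?J i H)"]) auto
      qed
    qed
  qed
qed

lemma count_split:
  assumes i: "i \<in> I" and I: "finite I"
  shows "card {H. sg I H \<and> card H = m} = card {K. sg (I - {i}) K \<and> card K = m}
     + (\<Sum>K\<in>{K. sg (I - {i}) K \<and> 2 * card K = m}. card (cos (I - {i}) K))"
proof -
  let ?J = "I - {i}"
  let ?Q = "{(K,W). sg ?J K \<and> (W = {} \<or> W \<in> cos ?J K)}"
  let ?f = "\<lambda>(K,W). glue i K W"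
  have J: "finite ?J" using I by simp
  have bij: "bij_betw ?f ?Q {H. sg I H}" by (rule decomp_bij[OF i])
  have cg: "card (?f p) = card (fst p) + card (snd p)" if "p \<in> ?Q" for p
  proof -
    obtain K W where p: "p = (K,W)" by (cases p)
    have "K \<subseteq> V ?J" "W \<subseteq> V ?J" using that p cos_sub by (auto simp: sg_def)
    then show ?thesis using card_glue[of K ?J W i] finite_subset[OF _ finite_V[OF J]] p by auto
  qed
  have "{H. sg I H \<and> card H = m} = ?f ` {p \<in> ?Q. card (fst p) + card (snd p) = m}"
  proof -
    have "{H. sg I H \<and> card H = m} = {H \<in> ?f ` ?Q. card H = m}"
      using bij by (auto simp: bij_betw_def)
    also have "\<dots> = ?f ` {p \<in> ?Q. card (fst p) + card (snd p) = m}"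
      using cg by force
    finally show ?thesis .
  qed
  moreover have "inj_on ?f {p \<in> ?Q. card (fst p) + card (snd p) = m}"
    using bij by (auto simp: bij_betw_def intro: inj_on_subset)
  ultimately have c1: "card {H. sg I H \<and> card H = m} = card {p \<in> ?Q. card (fst p) + card (snd p) = m}"
    by (simp add: card_image)
  let ?A = "(\<lambda>K. (K, {})) ` {K. sg ?J K \<and> card K = m}"
  let ?B = "Sigma {K. sg ?J K \<and> 2 * card K = m} (cos ?J)"
  have ne: "c \<noteq> {}" if "c \<in> cos ?J K" "sg ?J K" for c K
    using that by (auto simp: cos_def sg_def)
  have eq: "{p \<in> ?Q. card (fst p) + card (snd p) = m} = ?A \<union> ?B"
  proof
    show "{p \<in> ?Q. card (fst p) + card (snd p) = m} \<subseteq> ?A \<union> ?B"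
    proof
      fix p assume p: "p \<in> {p \<in> ?Q. card (fst p) + card (snd p) = m}"
      obtain K W where pk: "p = (K,W)" by (cases p)
      show "p \<in> ?A \<union> ?B"
      proof (cases "W = {}")
        case True then show ?thesis using p pk by auto
      next
        case False
        then have "W \<in> cos ?J K" "sg ?J K" using p pk by auto
        moreover then have "card W = card K" using card_cos(1)[OF _ J] by auto
        ultimately show ?thesis using p pk by auto
      qed
    qed
    show "?A \<union> ?B \<subseteq> {p \<in> ?Q. card (fst p) + card (snd p) = m}"
      using card_cos(1)[OF _ J] by auto
  qed
  have fQ: "finite ?Q"
  proof (rule finite_subset[where B="Pow (V ?J) \<times> Pow (V ?J)"])
    show "?Q \<subseteq> Pow (V ?J) \<times> Pow (V ?J)" using cos_sub by (auto simp: sg_def)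
  qed (use finite_V[OF J] in auto)
  have fB: "finite ?B" by (rule finite_subset[OF _ fQ]) auto
  have fA: "finite ?A" by (rule finite_imageI, rule finite_subset[OF _ finite_sgs[OF J]]) auto
  have disj: "?A \<inter> ?B = {}" using ne by auto
  have cA: "card ?A = card {K. sg ?J K \<and> card K = m}" by (rule card_image) (auto intro: inj_onI)
  have fK: "finite {K. sg ?J K \<and> 2 * card K = m}" by (rule finite_subset[OF _ finite_sgs[OF J]]) auto
  have fc: "finite (cos ?J K)" for K using finite_V[OF J] by (simp add: cos_def)
  have cB: "card ?B = (\<Sum>K\<in>{K. sg ?J K \<and> 2 * card K = m}. card (cos ?J K))"
    using fK fc by (simp add: card_SigmaI)
  show ?thesis using c1 eq card_Un_disjoint[OF fA fB disj] cA cB by simp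
qed

definition C :: "nat set \<Rightarrow> nat \<Rightarrow> nat" where
  "C I j = card {H. sg I H \<and> card H = 2 ^ j}"

lemma C_rec:
  assumes i: "i \<in> I" and I: "finite I"
  shows "C I 0 = C (I - {i}) 0"
    and "C I (Suc j) = C (I - {i}) (Suc j) + C (I - {i}) j * 2 ^ (card (I - {i}) - j)"
proof -
  let ?J = "I - {i}"
  have J: "finite ?J" using I by simp
  have "{K. sg ?J K \<and> 2 * card K = 2 ^ 0} = {}" by auto
  then show "C I 0 = C ?J 0" using count_split[OF i I, of "2^0"] by (simp add: C_def)
  have "(\<Sum>K\<in>{K. sg ?J K \<and> 2 * card K = 2 ^ Suc j}. card (cos ?J K))
      = (\<Sum>K\<in>{K. sg ?J K \<and> card K = 2 ^ j}. 2 ^ (card ?J - j))"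
  proof (rule sum.cong)
    show "{K. sg ?J K \<and> 2 * card K = 2 ^ Suc j} = {K. sg ?J K \<and> card K = 2 ^ j}" by auto
  next
    fix K assume "K \<in> {K. sg ?J K \<and> card K = 2 ^ j}"
    then have K: "sg ?J K" "card K = 2 ^ j" by auto
    have e: "2 ^ j * card (cos ?J K) = 2 ^ card ?J" using card_cos(2)[OF K(1) J] K(2) by simp
    then have "card (cos ?J K) \<noteq> 0" by (metis mult_0_right power_not_zero zero_neq_numeral)
    then have "2 ^ j * 1 \<le> (2::nat) ^ j * card (cos ?J K)" by (intro mult_le_mono2) simp
    then have "2 ^ j \<le> (2::nat) ^ card ?J" using e by simp
    then have "j \<le> card ?J" by (rule power_le_imp_le_exp[rotated]) simp
    then have "(2::nat) ^ card ?J = 2 ^ j * 2 ^ (card ?J - j)" by (simp add: power_add[symmetric])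
    then show "card (cos ?J K) = 2 ^ (card ?J - j)" using e by simp
  qed
  then show "C I (Suc j) = C ?J (Suc j) + C ?J j * 2 ^ (card ?J - j)"
    using count_split[OF i I, of "2 ^ Suc j"] by (simp add: C_def)
qed

fun gb :: "nat \<Rightarrow> nat \<Rightarrow> nat" where
  "gb 0 j = (if j = 0 then 1 else 0)"
| "gb (Suc n) 0 = 1"
| "gb (Suc n) (Suc j) = gb n (Suc j) + 2 ^ (n - j) * gb n j"

lemma gb_0: "gb n 0 = 1" by (cases n) auto

lemma C_gb: "finite I \<Longrightarrow> C I j = gb (card I) j"
proof (induction I arbitrary: j rule: finite_induct)
  case empty
  have p: "Suc 0 = 2 ^ j \<Longrightarrow> j = 0" by (cases j) auto
  have "{H. sg {} H \<and> card H = 2 ^ j} = (if j = 0 then {{zr {}}} else {})"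
    using p by (auto simp: sg_empty)
  then show ?case by (simp add: C_def)
next
  case (insert i F)
  have e: "insert i F - {i} = F" using insert(2) by auto
  show ?case
  proof (cases j)
    case 0
    then show ?thesis using C_rec(1)[of i "insert i F"] insert e by (simp add: gb_0)
  next
    case (Suc j')
    then show ?thesis using C_rec(2)[of i "insert i F" j'] insert e by simp
  qed
qed

lemma sg_pow2: "finite I \<Longrightarrow> sg I H \<Longrightarrow> \<exists>j. card H = 2 ^ j"
proof (induction I arbitrary: H rule: finite_induct)
  case empty
  then have "H = {zr {}}" by (simp add: sg_empty)
  then have "card H = 2 ^ 0" by simp
  then show ?case by blast
next
  case (insert i F)
  let ?I = "insert i F"
  have e: "?I - {i} = F" using insert(2) by auto
  have i: "i \<in> ?I" by simp
  note d = sg_decomp[OF i insert(4), unfolded e]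
  obtain j where j: "card (Kp F i H) = 2 ^ j" using insert(3)[OF d(1)] by blast
  have sub: "Kp F i H \<subseteq> V F" "Wp F i H \<subseteq> V F" using d(1,2) cos_sub by (auto simp: sg_def)
  have fin: "finite (Kp F i H)" "finite (Wp F i H)" using sub finite_V[OF insert(1)] finite_subset by auto
  have cH: "card H = card (Kp F i H) + card (Wp F i H)"
    using card_glue[OF sub insert(2) fin] d(3) by simp
  show ?case
  proof (cases "Wp F i H = {}")
    case True then show ?thesis using cH j by auto
  next
    case False
    then have "card (Wp F i H) = card (Kp F i H)" using d(2) card_cos(1)[OF d(1) insert(1)] by auto
    then have "card H = 2 ^ Suc j" using cH j by simp
    then show ?thesis by blast
  qed
qed

definition G :: "nat \<Rightarrow> nat" where
  "G n = (\<Sum>j=0..n. gb n j)"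

lemma card_sgs: assumes I: "finite I" shows "card {H. sg I H} = G (card I)"
proof -
  let ?A = "\<lambda>j. {H. sg I H \<and> card H = 2 ^ j}"
  have eq: "{H. sg I H} = (\<Union>j\<in>{0..card I}. ?A j)"
  proof
    show "{H. sg I H} \<subseteq> (\<Union>j\<in>{0..card I}. ?A j)"
    proof
      fix H assume "H \<in> {H. sg I H}"
      then have H: "sg I H" by simp
      obtain j where j: "card H = 2 ^ j" using sg_pow2[OF I H] by blast
      have "card H \<le> card (V I)" using H finite_V[OF I] by (auto simp: sg_def intro: card_mono)
      then have "(2::nat) ^ j \<le> 2 ^ card I" using j card_V[OF I] by simp
      then have "j \<le> card I" by (rule power_le_imp_le_exp[rotated]) simp
      then show "H \<in> (\<Union>j\<in>{0..card I}. ?A j)" using H j by auto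
    qed
  qed auto
  have "card (\<Union>j\<in>{0..card I}. ?A j) = (\<Sum>j=0..card I. card (?A j))"
  proof (rule card_UN_disjoint)
    show "\<forall>j\<in>{0..card I}. finite (?A j)" using finite_sgs[OF I] by auto
    show "\<forall>j\<in>{0..card I}. \<forall>j'\<in>{0..card I}. j \<noteq> j' \<longrightarrow> ?A j \<inter> ?A j' = {}" by auto
  qed simp
  then show ?thesis using eq C_gb[OF I] by (simp add: C_def G_def)
qed


definition P :: "nat \<Rightarrow> nat \<Rightarrow> rat" where
  "P n j = (\<Prod>l\<in>{0..<j}. (2::rat) ^ (n - l) - 1)"
definition D :: "nat \<Rightarrow> rat" where
  "D j = (\<Prod>l\<in>{1..j}. (2::rat) ^ l - 1)"

lemma D_nz: "D j \<noteq> 0"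
proof -
  have "(2::rat) ^ l - 1 \<noteq> 0" if "l \<in> {1..j}" for l
  proof -
    have "(1::rat) < 2 ^ l" using that by (intro one_less_power) auto
    then show ?thesis by simp
  qed
  then show ?thesis unfolding D_def by (subst prod_zero_iff) auto
qed

lemma P_Suc_Suc: "P (Suc n) (Suc j) = (2 ^ Suc n - 1) * P n j"
  unfolding P_def by (subst prod.atLeast0_lessThan_Suc_shift) simp

lemma P_Suc: "P n (Suc j) = P n j * (2 ^ (n - j) - 1)"
  unfolding P_def by (simp add: prod.atLeastLessThan_Suc)

lemma P_zero: "n < j \<Longrightarrow> P n j = 0"
  unfolding P_def by (rule prod_zero) (auto intro!: bexI[where x=n])

lemma D_Suc: "D (Suc j) = D j * (2 ^ Suc j - 1)"
  by (simp add: D_def)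

lemma gb_PD: "of_nat (gb n j) * D j = P n j"
proof (induction n arbitrary: j)
  case 0
  then show ?case by (cases j) (auto simp: D_def P_def P_zero)
next
  case (Suc n)
  show ?case
  proof (cases j)
    case 0
    then show ?thesis by (simp add: D_def P_def)
  next
    case (Suc j')
    have "of_nat (gb (Suc n) (Suc j')) * D (Suc j')
        = of_nat (gb n (Suc j')) * D (Suc j') + 2 ^ (n - j') * (of_nat (gb n j') * D j') * (2 ^ Suc j' - 1)"
      by (simp add: D_Suc algebra_simps)
    also have "\<dots> = P n (Suc j') + 2 ^ (n - j') * P n j' * (2 ^ Suc j' - 1)"
      using Suc.IH by simp
    also have "\<dots> = P n j' * (2 ^ (n - j') * 2 ^ Suc j' - 1)"
      by (simp add: P_Suc algebra_simps)
    also have "\<dots> = P (Suc n) (Suc j')"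
    proof (cases "j' \<le> n")
      case True
      then have "(2::rat) ^ (n - j') * 2 ^ Suc j' = 2 ^ Suc n" by (simp add: power_add[symmetric])
      then show ?thesis by (simp add: P_Suc_Suc)
    next
      case False
      then show ?thesis by (simp add: P_Suc_Suc P_zero)
    qed
    finally show ?thesis using Suc by simp
  qed
qed

lemma gbinom2_gb: "gbinom2 n j = of_nat (gb n j)"
proof -
  have "gbinom2 n j = P n j / D j" by (simp add: gbinom2_def P_def D_def)
  also have "\<dots> = of_nat (gb n j)" using gb_PD[of n j] D_nz[of j] by (simp add: field_simps)
  finally show ?thesis .
qed

definition su :: "nat set \<Rightarrow> (nat \<Rightarrow> int) set \<Rightarrow> bool" where
  "su S H \<longleftrightarrow> (\<forall>s\<in>S. \<exists>x\<in>H. x s = 1)"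

lemma su_insert: "su (insert i S) H \<longleftrightarrow> (\<exists>x\<in>H. x i = 1) \<and> su S H"
  by (simp add: su_def)

lemma su_rec:
  assumes I: "finite I" and i: "i \<in> I" and S: "S \<subseteq> I" and iS: "i \<notin> S"
  shows "card {H. sg I H \<and> su S H} = card {H. sg I H \<and> su (insert i S) H} + card {K. sg (I - {i}) K \<and> su S K}"
proof -
  let ?J = "I - {i}"
  have J: "finite ?J" using I by simp
  let ?X = "{H. sg I H \<and> su S H \<and> \<not> (\<exists>x\<in>H. x i = 1)}"
  have A: "{H. sg I H \<and> su S H} = {H. sg I H \<and> su (insert i S) H} \<union> ?X"
  proof (intro equalityI subsetI)
    fix H assume "H \<in> {H. sg I H \<and> su S H}"
    then have h: "sg I H" "su S H" by auto
    show "H \<in> {H. sg I H \<and> su (insert i S) H} \<union> ?X"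
    proof (cases "\<exists>x\<in>H. x i = 1")
      case True
      then have "H \<in> {H. sg I H \<and> su (insert i S) H}" using h unfolding su_insert by blast
      then show ?thesis by (rule UnI1)
    next
      case False
      then have "H \<in> ?X" using h by blast
      then show ?thesis by (rule UnI2)
    qed
  next
    fix H assume "H \<in> {H. sg I H \<and> su (insert i S) H} \<union> ?X"
    then show "H \<in> {H. sg I H \<and> su S H}"
      unfolding su_insert by (elim UnE) simp_all
  qed
  have img: "?X = (\<lambda>K. glue i K {}) ` {K. sg ?J K \<and> su S K}"
  proof
    show "?X \<subseteq> (\<lambda>K. glue i K {}) ` {K. sg ?J K \<and> su S K}"
    proof
      fix H assume "H \<in> ?X"
      then have H: "sg I H" "su S H" "\<not> (\<exists>x\<in>H. x i = 1)" by auto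
      note d = sg_decomp[OF i H(1)]
      have W0: "Wp ?J i H = {}" using H(3) by (auto simp: Wp_def)
      have suK: "su S (Kp ?J i H)" unfolding su_def
      proof
        fix s assume s: "s \<in> S"
        obtain x where x: "x \<in> H" "x s = 1" using H(2) s by (auto simp: su_def)
        have "x \<in> V I" using x H(1) by (auto simp: sg_def)
        then have "x i = 0 \<or> x i = 1" using i by (auto simp: V_iff)
        then have "x i = 0" using H(3) x by auto
        moreover have "s \<in> ?J" using s S iS by auto
        ultimately have "restrict x ?J \<in> Kp ?J i H" "restrict x ?J s = 1"
          using x unfolding Kp_def by auto
        then show "\<exists>y\<in>Kp ?J i H. y s = 1" by blast
      qed
      have "glue i (Kp ?J i H) {} = H" using d(3) unfolding W0 .
      then have e: "H = glue i (Kp ?J i H) {}" by (rule sym)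
      show "H \<in> (\<lambda>K. glue i K {}) ` {K. sg ?J K \<and> su S K}"
        by (rule image_eqI[where f="\<lambda>K. glue i K {}" and x="Kp ?J i H", OF e]) (use d(1) suK in simp)
    qed
    show "(\<lambda>K. glue i K {}) ` {K. sg ?J K \<and> su S K} \<subseteq> ?X"
    proof
      fix H assume "H \<in> (\<lambda>K. glue i K {}) ` {K. sg ?J K \<and> su S K}"
      then obtain K where K: "sg ?J K" "su S K" "H = glue i K {}" by auto
      have "sg I H" using glue_sg[OF i K(1)] K(3) by simp
      moreover have "su S H" unfolding su_def
      proof
        fix s assume s: "s \<in> S"
        obtain x where x: "x \<in> K" "x s = 1" using K(2) s by (auto simp: su_def)
        have "s \<noteq> i" using s iS by auto
        then show "\<exists>y\<in>H. y s = 1" using x K(3) unfolding glue_def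
          by (intro bexI[where x="x(i:=0)"]) auto
      qed
      moreover have "\<not> (\<exists>x\<in>H. x i = 1)" using K(3) by (auto simp: glue_def)
      ultimately show "H \<in> ?X" by simp
    qed
  qed
  have inj: "inj_on (\<lambda>K. glue i K {}) {K. sg ?J K \<and> su S K}"
  proof (rule inj_onI)
    fix K K' assume k: "K \<in> {K. sg ?J K \<and> su S K}" and k': "K' \<in> {K. sg ?J K \<and> su S K}"
      and e: "glue i K {} = glue i K' {}"
    have s1: "K \<subseteq> V ?J" using k by (simp add: sg_def)
    have s2: "K' \<subseteq> V ?J" using k' by (simp add: sg_def)
    have iJ: "i \<notin> ?J" by simp
    have "K = Kp ?J i (glue i K {})" by (rule Kp_glue[OF s1 iJ, symmetric])
    also have "\<dots> = Kp ?J i (glue i K' {})" by (simp only: e)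
    also have "\<dots> = K'" by (rule Kp_glue[OF s2 iJ])
    finally show "K = K'" .
  qed
  have f1: "finite {H. sg I H \<and> su (insert i S) H}"
    by (rule finite_subset[OF _ finite_sgs[OF I]]) (rule Collect_mono, simp)
  have f2: "finite ?X" by (rule finite_subset[OF _ finite_sgs[OF I]]) (rule Collect_mono, simp)
  have dj: "{H. sg I H \<and> su (insert i S) H} \<inter> ?X = {}"
  proof (rule equals0I)
    fix H assume "H \<in> {H. sg I H \<and> su (insert i S) H} \<inter> ?X"
    then have "su (insert i S) H" "\<not> (\<exists>x\<in>H. x i = 1)" by auto
    then show False unfolding su_insert by simp
  qed
  have c1: "card {H. sg I H \<and> su S H} = card {H. sg I H \<and> su (insert i S) H} + card ?X"
    unfolding A by (rule card_Un_disjoint[OF f1 f2 dj])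
  have c2: "card ?X = card {K. sg ?J K \<and> su S K}"
    unfolding img by (rule card_image[OF inj])
  show ?thesis unfolding c1 c2 ..
qed

definition F :: "nat \<Rightarrow> nat \<Rightarrow> int" where
  "F n s = (\<Sum>t=0..s. (-1) ^ t * int (s choose t) * int (G (n - t)))"

lemma F_rec: "F n (Suc s) = F n s - F (n - 1) s"
proof -
  let ?g = "\<lambda>t. int (G t)"
  have 1: "F n (Suc s) = ?g n + (\<Sum>t=0..s. (-1) ^ Suc t * int (s choose Suc t) * ?g (n - Suc t))
      + (\<Sum>t=0..s. (-1) ^ Suc t * int (s choose t) * ?g (n - Suc t))"
    unfolding F_def by (subst sum.atLeast0_atMost_Suc_shift) (simp add: sum.distrib[symmetric] algebra_simps)
  have 2: "F n s = ?g n + (\<Sum>t=0..s. (-1) ^ Suc t * int (s choose Suc t) * ?g (n - Suc t))"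
  proof -
    have "F n s = (\<Sum>t=0..Suc s. (-1) ^ t * int (s choose t) * ?g (n - t))"
      unfolding F_def by (subst sum.atLeast0_atMost_Suc) simp
    also have "\<dots> = ?g n + (\<Sum>t=0..s. (-1) ^ Suc t * int (s choose Suc t) * ?g (n - Suc t))"
      by (subst sum.atLeast0_atMost_Suc_shift) simp
    finally show ?thesis .
  qed
  have d: "n - 1 - t = n - Suc t" for t by simp
  have 3: "(\<Sum>t=0..s. (-1) ^ Suc t * int (s choose t) * ?g (n - Suc t)) = - F (n - 1) s"
    unfolding F_def sum_negf[symmetric] by (rule sum.cong[OF refl]) (simp add: d)
  show ?thesis using 1 2 3 by simp
qed

lemma IE: "finite S \<Longrightarrow> finite I \<Longrightarrow> S \<subseteq> I \<Longrightarrow>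
  int (card {H. sg I H \<and> su S H}) = F (card I) (card S)"
proof (induction S arbitrary: I rule: finite_induct)
  case empty
  then show ?case by (simp add: su_def card_sgs F_def)
next
  case (insert i S)
  have i: "i \<in> I" and S: "S \<subseteq> I" using insert by auto
  have r: "card {H. sg I H \<and> su S H} = card {H. sg I H \<and> su (insert i S) H} + card {K. sg (I - {i}) K \<and> su S K}"
    by (rule su_rec[OF insert(4) i S insert(2)])
  have h1: "int (card {H. sg I H \<and> su S H}) = F (card I) (card S)" using insert S by blast
  have h2: "int (card {H. sg (I - {i}) H \<and> su S H}) = F (card (I - {i})) (card S)"
    using insert(3)[of "I - {i}"] insert(2,4) S by auto
  have "card (I - {i}) = card I - 1" using i insert(4) by simp
  then show ?case using r h1 h2 insert(1,2) F_rec[of "card I" "card S"] by simp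
qed

lemma proj_su: "sg {..<k} H \<Longrightarrow> proj_surjective k H \<longleftrightarrow> su {..<k} H"
proof -
  assume H: "sg {..<k} H"
  have c: "carrier (integer_mod_group 2) = {0,1::int}" by (auto simp: carrier_integer_mod_group)
  show ?thesis
  proof
    assume "proj_surjective k H"
    then show "su {..<k} H" unfolding proj_surjective_def su_def c
      by (metis (mono_tags, lifting) image_iff insertCI lessThan_iff)
  next
    assume s: "su {..<k} H"
    show "proj_surjective k H" unfolding proj_surjective_def c
    proof (intro allI impI)
      fix i assume i: "i < k"
      have "(\<lambda>x. x i) ` H \<subseteq> {0,1}"
      proof
        fix y assume "y \<in> (\<lambda>x. x i) ` H"
        then obtain x where x: "x \<in> H" "y = x i" by auto
        then have "x \<in> V {..<k}" using H by (auto simp: sg_def)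
        then have "x i = 0 \<or> x i = 1" using i by (simp add: V_iff)
        then show "y \<in> {0,1}" using x by auto
      qed
      moreover have "0 \<in> (\<lambda>x. x i) ` H"
        using H i by (auto simp: sg_def zr_def intro!: image_eqI[where x="zr {..<k}"])
      moreover have "1 \<in> (\<lambda>x. x i) ` H"
      proof -
        obtain x where "x \<in> H" "x i = 1" using s i by (auto simp: su_def)
        then show ?thesis by (intro image_eqI[where x=x]) auto
      qed
      ultimately show "(\<lambda>x. x i) ` H = {0,1}" by auto
    qed
  qed
qed

theorem mainTheorem5:
  fixes k :: nat
  shows "rat_of_nat (card {H. subgroup H (Z2pow k) \<and> proj_surjective k H}) =
    (\<Sum>i=0..k. (-1) ^ (i + k) * rat_of_nat (k choose i) * (\<Sum>j=0..i. gbinom2 i j))"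
proof -
  have seq: "{H. subgroup H (Z2pow k) \<and> proj_surjective k H} = {H. sg {..<k} H \<and> su {..<k} H}"
    using sg_iff_subgroup proj_su by blast
  have "int (card {H. sg {..<k} H \<and> su {..<k} H}) = F k k" using IE[of "{..<k}" "{..<k}"] by simp
  then have "rat_of_nat (card {H. subgroup H (Z2pow k) \<and> proj_surjective k H}) = of_int (F k k)"
    using seq by (metis of_int_of_nat_eq)
  also have "\<dots> = (\<Sum>t=0..k. (-1) ^ t * rat_of_nat (k choose t) * rat_of_nat (G (k - t)))"
    by (simp add: F_def)
  also have "\<dots> = (\<Sum>i=0..k. (-1) ^ (i + k) * rat_of_nat (k choose i) * rat_of_nat (G i))"
  proof (subst sum.atLeastAtMost_rev[of _ 0 k], rule sum.cong)
    fix i assume "i \<in> {0..k}"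
    then have i: "i \<le> k" by simp
    have e: "i + k = (k - i) + 2 * i" using i by simp
    have "(-1::rat) ^ (i + k) = (-1) ^ (k - i)" unfolding e by (simp add: power_add power_mult)
    moreover have "k choose (k - i) = k choose i" using binomial_symmetric[OF i] by simp
    moreover have "k - (k - i) = i" using i by simp
    ultimately show "(-1) ^ (k + 0 - i) * rat_of_nat (k choose (k + 0 - i)) * rat_of_nat (G (k - (k + 0 - i)))
       = (-1) ^ (i + k) * rat_of_nat (k choose i) * rat_of_nat (G i)"
      by simp
  qed simp
  also have "\<dots> = (\<Sum>i=0..k. (-1) ^ (i + k) * rat_of_nat (k choose i) * (\<Sum>j=0..i. gbinom2 i j))"
    by (simp add: G_def gbinom2_gb)
  finally show ?thesis .
qed

end
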